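(* Let $f(x)=\frac{2x}{\tanh x}-\log\left(\frac{\cosh^2 x+1}{2}\right)$ for $x>0$. There is a point $x_1=1.606\ldots$ such that for all $x>0$, $$2<f(x)\le f(x_1)=2.1312\ldots .$$ *)

theory Defs
  imports Complex_Main
begin

definition f_lemma2 :: "real \<Rightarrow> real" where
  "f_lemma2 x = 2 * x / tanh x - ln ((cosh x ^ 2 + 1) / 2)"

end

theory Submission
  imports Defs "HOL-Real_Asymp.Real_Asymp"
begin


definition gg :: "real \<Rightarrow> real" where "gg y = 4*sinh y - y*cosh y - 3*y"
definition kk :: "real \<Rightarrow> real" where "kk y = 6*y*cosh y + 6*y - y^2*sinh y - 12*sinh y"
definition k1 :: "real \<Rightarrow> real" where "k1 y = -6*cosh y + 4*y*sinh y + 6 - y^2*cosh y"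
definition k2 :: "real \<Rightarrow> real" where "k2 y = -2*sinh y + 2*y*cosh y - y^2*sinh y"

lemma neg_from_deriv:
  fixes F F' :: "real \<Rightarrow> real"
  assumes "F 0 = 0" "\<And>y. (F has_real_derivative F' y) (at y)" "\<And>y. y > 0 \<Longrightarrow> F' y < 0" "y > 0"
  shows "F y < 0"
proof -
  obtain z where "0 < z" "z < y" "F y - F 0 = (y - 0) * F' z"
    using MVT2[of 0 y F F'] assms by auto
  moreover have "F' z < 0" using assms(3) \<open>0<z\<close> by auto
  ultimately show ?thesis using assms(1,4) by (simp add: mult_pos_neg)
qed

lemma k2_deriv: "(k2 has_real_derivative (- (y*y*cosh y))) (at y)"
  unfolding k2_def
  by (rule derivative_eq_intros refl | simp)+ (simp add: algebra_simps power2_eq_square)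

lemma k2_neg: "y > 0 \<Longrightarrow> k2 y < 0"
  by (rule neg_from_deriv[OF _ k2_deriv]) (auto simp: k2_def)

lemma k1_deriv: "(k1 has_real_derivative k2 y) (at y)"
  unfolding k1_def k2_def
  by (rule derivative_eq_intros refl | simp)+

lemma k1_neg: "y > 0 \<Longrightarrow> k1 y < 0"
  by (rule neg_from_deriv[OF _ k1_deriv]) (auto simp: k1_def k2_neg)

lemma kk_deriv: "(kk has_real_derivative k1 y) (at y)"
  unfolding kk_def k1_def
  by (rule derivative_eq_intros refl | simp)+

lemma kk_neg: "y > 0 \<Longrightarrow> kk y < 0"
  by (rule neg_from_deriv[OF _ kk_deriv]) (auto simp: kk_def k1_neg)

lemma G_deriv: "y \<noteq> 0 \<Longrightarrow> ((\<lambda>y. gg y / y^3) has_real_derivative kk y / y^4) (at y)"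
  unfolding gg_def kk_def
  by (rule derivative_eq_intros refl | simp)+ (simp add: field_simps power2_eq_square eval_nat_numeral)

lemma G_strict: assumes "0 < y" "y < z" shows "gg z / z^3 < gg y / y^3"
proof -
  obtain t where t: "y < t" "t < z" "gg z / z^3 - gg y / y^3 = (z - y) * (kk t / t^4)"
    using MVT2[of y z "\<lambda>y. gg y / y^3" "\<lambda>y. kk y / y^4"] assms G_deriv by force
  have "kk t / t^4 < 0" using kk_neg[of t] t assms by (simp add: divide_neg_pos)
  hence "(z - y) * (kk t / t^4) < 0" using assms by (intro mult_pos_neg) auto
  thus ?thesis using t by linarith
qed



definition PP :: "real \<Rightarrow> real" where "PP x = 2*sinh x*cosh x - x*(cosh x^2+1)"

lemma PP_gg: "PP x = gg (2*x) / 4"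
  unfolding PP_def gg_def sinh_double cosh_double
  using cosh_square_eq[of x] by (simp add: algebra_simps)

lemma gg_exp: "gg y = (2 - y/2)*exp y - (2 + y/2)/exp y - 3*y"
  unfolding gg_def sinh_field_def cosh_field_def exp_minus
  by (simp add: field_simps)

lemma f_alt: "f_lemma2 = (\<lambda>x. 2*x*cosh x / sinh x - ln((cosh x^2+1)/2))"
  unfolding f_lemma2_def tanh_def by (simp add: fun_eq_iff)

lemma f_deriv: assumes "x > 0"
  shows "(f_lemma2 has_real_derivative 2*PP x/(sinh x^2*(cosh x^2+1))) (at x)"
  unfolding f_alt
  apply (insert assms)
  apply (rule derivative_eq_intros refl | simp add: add_nonneg_pos)+
  using cosh_square_eq[of x] apply (simp add: PP_def)
  apply (subgoal_tac "sinh x \<noteq> 0" "2 + sinh x * sinh x \<noteq> 0")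
  apply (simp add: field_simps power2_eq_square)
  apply algebra
  apply (smt (verit) zero_le_square)
  by simp


lemma exp_lower: "0 \<le> (x::real) \<Longrightarrow> (\<Sum>m<n. x^m/fact m) \<le> exp x"
proof -
  assume x: "0 \<le> x"
  obtain t where "\<bar>t\<bar> \<le> \<bar>x\<bar>" and e: "exp x = (\<Sum>m<n. (x ^ m) / fact m) + (exp t / fact n) * x ^ n"
    using Maclaurin_exp_le by blast
  have "0 \<le> (exp t / fact n) * x ^ n" using x by simp
  thus ?thesis using e by linarith
qed

lemma exp_upper: "0 \<le> (x::real) \<Longrightarrow> x^n/fact n < 1 \<Longrightarrow> exp x \<le> (\<Sum>m<n. x^m/fact m) / (1 - x^n/fact n)"
proof -
  assume x: "0 \<le> x" and r: "x^n/fact n < 1"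
  obtain t where t: "\<bar>t\<bar> \<le> \<bar>x\<bar>" and e: "exp x = (\<Sum>m<n. (x ^ m) / fact m) + (exp t / fact n) * x ^ n"
    using Maclaurin_exp_le by blast
  have "exp t \<le> exp x" using t x by simp
  hence "(exp t / fact n) * x ^ n \<le> exp x * (x^n/fact n)" using x
    by (simp add: divide_right_mono mult_right_mono)
  hence "exp x \<le> (\<Sum>m<n. x^m/fact m) + exp x * (x^n/fact n)" using e by linarith
  hence "exp x * (1 - x^n/fact n) \<le> (\<Sum>m<n. x^m/fact m)" by (simp add: algebra_simps)
  thus ?thesis using r by (simp add: pos_le_divide_eq mult.commute)
qed

lemma Xlo: "2482869/100000 \<le> exp (3212/1000::real)"
proof -
  have "(2482869/100000::real) \<le> (\<Sum>m<18. (3212/1000)^m/fact m)"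
    by (simp add: eval_nat_numeral fact_Suc)
  also have "\<dots> \<le> exp (3212/1000)" by (rule exp_lower) simp
  finally show ?thesis .
qed

lemma Xhi: "exp (3212/1000::real) \<le> 2482870/100000"
proof -
  have "exp (3212/1000::real) \<le> (\<Sum>m<18. (3212/1000)^m/fact m) / (1 - (3212/1000)^18/fact 18)"
    by (rule exp_upper) (simp_all add: eval_nat_numeral fact_Suc)
  also have "\<dots> \<le> 2482870/100000" by (simp add: eval_nat_numeral fact_Suc)
  finally show ?thesis .
qed

lemma Yhi: "exp (3213/1000::real) \<le> 248536/10000"
proof -
  have "exp (3213/1000::real) \<le> (\<Sum>m<18. (3213/1000)^m/fact m) / (1 - (3213/1000)^18/fact 18)"
    by (rule exp_upper) (simp_all add: eval_nat_numeral fact_Suc)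
  also have "\<dots> \<le> 248536/10000" by (simp add: eval_nat_numeral fact_Suc)
  finally show ?thesis .
qed

lemma Elo: "49/10 \<le> exp (1606/1000::real)"
proof -
  have "(49/10::real) \<le> (\<Sum>m<8. (1606/1000)^m/fact m)"
    by (simp add: eval_nat_numeral fact_Suc)
  also have "\<dots> \<le> exp (1606/1000)" by (rule exp_lower) simp
  finally show ?thesis .
qed

lemma Wlo: "(2482870/100000 + 6 + 1/(2482869/100000))/8 \<le> exp (135035/100000::real)"
proof -
  have "(2482870/100000 + 6 + 1/(2482869/100000))/8 \<le> (\<Sum>m<14. (135035/100000::real)^m/fact m)"
    by (simp add: eval_nat_numeral fact_Suc)
  also have "\<dots> \<le> exp (135035/100000)" by (rule exp_lower) simp
  finally show ?thesis .
qed

lemma W2hi: "exp (1350305/1000000::real) \<le> (2482869/100000 + 6 + 1/(2482870/100000))/8"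
proof -
  have "exp (1350305/1000000::real) \<le> (\<Sum>m<14. (1350305/1000000)^m/fact m) / (1 - (1350305/1000000)^14/fact 14)"
    by (rule exp_upper) (simp_all add: eval_nat_numeral fact_Suc)
  also have "\<dots> \<le> (2482869/100000 + 6 + 1/(2482870/100000))/8" by (simp add: eval_nat_numeral fact_Suc)
  finally show ?thesis .
qed

lemma exp2: "exp (2::real) < 8"
proof -
  have "exp (2::real) \<le> (\<Sum>m<12. 2^m/fact m) / (1 - 2^12/fact 12)"
    by (rule exp_upper) (simp_all add: eval_nat_numeral fact_Suc)
  also have "\<dots> < 8" by (simp add: eval_nat_numeral fact_Suc)
  finally show ?thesis .
qed


lemma PP_pos_prop: assumes "0 < x" "x < z" "PP z \<ge> 0" shows "PP x > 0"
proof -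
  have "gg (2*z) / (2*z)^3 < gg (2*x) / (2*x)^3" using G_strict[of "2*x" "2*z"] assms by simp
  moreover have "gg (2*z) / (2*z)^3 \<ge> 0" using assms by (simp add: PP_gg)
  ultimately have "gg (2*x) / (2*x)^3 > 0" by linarith
  thus ?thesis using assms by (simp add: PP_gg zero_less_divide_iff)
qed

lemma PP_neg_prop: assumes "0 < x" "x < z" "PP x \<le> 0" shows "PP z < 0"
proof -
  have "gg (2*z) / (2*z)^3 < gg (2*x) / (2*x)^3" using G_strict[of "2*x" "2*z"] assms by simp
  moreover have "gg (2*x) / (2*x)^3 \<le> 0" using assms by (simp add: PP_gg divide_nonpos_pos)
  ultimately have "gg (2*z) / (2*z)^3 < 0" by linarith
  thus ?thesis using assms by (simp add: PP_gg divide_less_0_iff)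
qed

lemma lin_pos: fixes E L p q r :: real
  assumes "L \<le> E" "0 < L" "0 \<le> p" "0 \<le> q" "0 < p*L - q/L - r" shows "0 < p*E - q/E - r"
proof -
  have "p*L \<le> p*E" using assms by (simp add: mult_left_mono)
  moreover have "q/E \<le> q/L" using assms by (intro divide_left_mono) auto
  ultimately show ?thesis using assms(5) by linarith
qed

lemma lin_neg: fixes E U p q r :: real
  assumes "E \<le> U" "0 < E" "0 \<le> p" "0 \<le> q" "p*U - q/U - r < 0" shows "p*E - q/E - r < 0"
proof -
  have "p*E \<le> p*U" using assms by (simp add: mult_left_mono)
  moreover have "q/U \<le> q/E" using assms by (intro divide_left_mono) auto
  ultimately show ?thesis using assms(5) by linarith
qed

lemma lin_bnd: fixes P A B K z a c :: real
  assumes "P = (A - B - 6*z)/4" "A \<le> K" "0 \<le> B" "a \<le> z" "(K - 6*a)/4 \<le> c" shows "P \<le> c"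
  using assms by (simp add: field_simps)

lemma lin_f: fixes F k t l t1 t2 w1 w2 lo hi :: real
  assumes "F = k*(1+t) - l" "t1 \<le> t" "t \<le> t2" "w2 \<le> l" "l \<le> w1" "0 \<le> k"
    "lo \<le> k*(1+t1) - w1" "k*(1+t2) - w2 \<le> hi"
  shows "lo \<le> F \<and> F \<le> hi"
proof -
  have "k*(1+t1) \<le> k*(1+t)" using assms by (intro mult_left_mono) auto
  moreover have "k*(1+t) \<le> k*(1+t2)" using assms by (intro mult_left_mono) auto
  ultimately show ?thesis using assms by linarith
qed

lemma q_le: fixes u v U V w :: real assumes "u \<le> U" "v \<le> V" "(U+6+V)/8 \<le> w" shows "(u+6+v)/8 \<le> w"
proof -
  have "(u+6+v)/8 \<le> (U+6+V)/8" using assms by (intro divide_right_mono) auto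
  thus ?thesis using assms(3) by (rule order_trans)
qed

lemma q_ge: fixes u v U V w :: real assumes "U \<le> u" "V \<le> v" "w \<le> (U+6+V)/8" shows "w \<le> (u+6+v)/8"
proof -
  have "(U+6+V)/8 \<le> (u+6+v)/8" using assms by (intro divide_right_mono) auto
  with assms(3) show ?thesis by (rule order_trans)
qed

lemma PPa: "PP (1606/1000) > 0"
proof -
  have g: "gg (3212/1000) = (2 - (3212/1000)/2)*exp (3212/1000) - (2+(3212/1000)/2)/exp (3212/1000) - 3*(3212/1000)"
    by (rule gg_exp)
  have "0 < (2 - (3212/1000)/2)*exp (3212/1000) - (2+(3212/1000)/2)/exp (3212/1000) - 3*(3212/1000::real)"
    by (rule lin_pos[OF Xlo]) (simp_all add: divide_simps)
  hence "gg (3212/1000) > 0" unfolding g .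
  thus ?thesis by (simp add: PP_gg)
qed

lemma PPb: "PP (16065/10000) < 0"
proof -
  have g: "gg (3213/1000) = (2 - (3213/1000)/2)*exp (3213/1000) - (2+(3213/1000)/2)/exp (3213/1000) - 3*(3213/1000)"
    by (rule gg_exp)
  have "(2 - (3213/1000)/2)*exp (3213/1000) - (2+(3213/1000)/2)/exp (3213/1000) - 3*(3213/1000::real) < 0"
    by (rule lin_neg[OF Yhi]) (simp_all add: divide_simps)
  hence "gg (3213/1000) < 0" unfolding g .
  thus ?thesis by (simp add: PP_gg)
qed

lemma PP_bound: assumes "1606/1000 \<le> (z::real)" "z \<le> 16065/10000" shows "PP z \<le> 2/25"
proof -
  define E where "E = exp (2*z)"
  have "E \<le> exp (3213/1000)" unfolding E_def using assms by simp
  hence E: "E \<le> 248536/10000" using Yhi by linarith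
  have Ep: "E > 0" unfolding E_def by simp
  define A where "A = (2 - z)*E"
  define B where "B = (2+z)/E"
  have g: "PP z = (A - B - 6*z)/4"
    unfolding PP_gg gg_exp E_def A_def B_def by simp
  have h1: "A \<le> (2 - 1606/1000) * (248536/10000)"
    unfolding A_def by (rule mult_mono) (use assms E Ep in simp_all)
  have h2: "B \<ge> 0" unfolding B_def using Ep assms by simp
  show ?thesis by (rule lin_bnd[OF g h1 h2 assms(1)]) (simp add: divide_simps)
qed

lemma sinh_lb: assumes "1606/1000 \<le> (z::real)" shows "19/10 \<le> sinh z"
proof -
  have "exp (1606/1000) \<le> exp z" using assms by simp
  hence "49/10 \<le> exp z" using Elo by linarith
  moreover have "exp (-z) \<le> 1" using assms by simp
  moreover have "2*sinh z = exp z - exp (-z)" by (simp add: sinh_field_def)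
  ultimately show ?thesis by linarith
qed

lemma D_bound: assumes "1606/1000 \<le> (z::real)" "z \<le> 16065/10000"
  shows "2*PP z/(sinh z^2*(cosh z^2+1)) \<le> 1/100"
proof -
  have s: "19/10 \<le> sinh z" using sinh_lb assms by simp
  have s2: "(19/10)^2 \<le> sinh z^2" by (rule power_mono) (use s in simp_all)
  have c2: "cosh z^2 + 1 = sinh z^2 + 2" using cosh_square_eq[of z] by simp
  have "(19/10)^2 * ((19/10)^2+2) \<le> sinh z^2 * (cosh z^2+1)"
    unfolding c2 by (rule mult_mono) (use s2 in simp_all)
  moreover have "(20::real) \<le> (19/10)^2 * ((19/10)^2+2)" by (simp add: power2_eq_square)
  ultimately have den: "20 \<le> sinh z^2 * (cosh z^2+1)" by linarith
  have le: "2*PP z \<le> 1/100 * (sinh z^2*(cosh z^2+1))" using PP_bound[OF assms] den by linarith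
  have pos: "0 < sinh z^2*(cosh z^2+1)" using den by linarith
  show ?thesis using le by (simp only: pos_divide_le_eq[OF pos])
qed

lemma exp_two: "exp (2*y) = exp y * exp (y::real)"
  by (simp only: mult_2 exp_add)

lemma coth_exp: "(y::real) \<noteq> 0 \<Longrightarrow> cosh y / sinh y = 1 + 2/(exp(2*y) - 1)"
proof -
  assume y: "y \<noteq> 0"
  have "exp y * exp y \<noteq> 1"
    by (metis exp_two exp_eq_one_iff mult_eq_0_iff y zero_neq_numeral)
  hence "exp y * exp y - 1 \<noteq> 0" by simp
  thus ?thesis unfolding sinh_field_def cosh_field_def exp_minus exp_two
    by (simp add: field_simps)
qed

lemma Q_exp: "(cosh (y::real)^2 + 1)/2 = (exp(2*y) + 6 + 1/exp(2*y))/8"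
  unfolding cosh_field_def exp_minus exp_two
  by (simp add: field_simps power2_eq_square)

lemma fa_bounds: "21312/10000 \<le> f_lemma2 (1606/1000) \<and> f_lemma2 (1606/1000) \<le> 2131286/1000000"
proof -
  define X where "X = exp (3212/1000::real)"
  have Xl: "2482869/100000 \<le> X" using Xlo unfolding X_def .
  have Xh: "X \<le> 2482870/100000" using Xhi unfolding X_def .
  have fa: "f_lemma2 (1606/1000) = 2*(1606/1000)*(1 + 2/(X-1)) - ln ((X + 6 + 1/X)/8)"
  proof -
    have "f_lemma2 (1606/1000) = 2*(1606/1000)*(cosh (1606/1000) / sinh (1606/1000)) - ln((cosh (1606/1000)^2 + 1)/2)"
      unfolding f_alt by simp
    also have "\<dots> = 2*(1606/1000)*(1 + 2/(X-1)) - ln ((X + 6 + 1/X)/8)"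
    proof -
      have c: "cosh (1606/1000) / sinh (1606/1000) = 1 + 2/(X-1)"
        using coth_exp[of "1606/1000"] unfolding X_def by simp
      have q: "(cosh (1606/1000)^2+1)/2 = (X + 6 + 1/X)/8"
        using Q_exp[of "1606/1000"] unfolding X_def by simp
      show ?thesis by (simp only: c q)
    qed
    finally show ?thesis .
  qed
  have t1: "2/(2482870/100000 - 1) \<le> 2/(X-1::real)"
    by (rule divide_left_mono) (use Xl Xh in simp_all)
  have t2: "2/(X-1) \<le> 2/(2482869/100000 - 1::real)"
    by (rule divide_left_mono) (use Xl Xh in simp_all)
  have Xp: "X > 0" using Xl by linarith
  have i1: "1/X \<le> 1/(2482869/100000::real)" by (rule divide_left_mono) (use Xl Xp in simp_all)
  have i2: "1/(2482870/100000::real) \<le> 1/X" by (rule divide_left_mono) (use Xh Xp in simp_all)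
  have Qp: "(X + 6 + 1/X)/8 > 0" using Xp by (intro divide_pos_pos add_pos_pos) auto
  have "(X + 6 + 1/X)/8 \<le> exp (135035/100000)" by (rule q_le[OF Xh i1 Wlo])
  hence l1: "ln ((X + 6 + 1/X)/8) \<le> 135035/100000"
    using Qp by (metis ln_exp ln_le_cancel_iff exp_gt_zero)
  have "exp (1350305/1000000) \<le> (X + 6 + 1/X)/8" by (rule q_ge[OF Xl i2 W2hi])
  hence l2: "1350305/1000000 \<le> ln ((X + 6 + 1/X)/8)"
    using Qp by (metis ln_exp ln_le_cancel_iff exp_gt_zero)
  show ?thesis
    by (rule lin_f[OF fa t1 t2 l2 l1]) (simp_all add: divide_simps)
qed

lemma D_pos: "0 < z \<Longrightarrow> 0 < PP z \<Longrightarrow> 0 < 2*PP z/(sinh z^2*(cosh z^2+1))"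
  by (simp add: add_nonneg_pos)
lemma D_neg: "0 < z \<Longrightarrow> PP z < 0 \<Longrightarrow> 2*PP z/(sinh z^2*(cosh z^2+1)) < 0"
  by (simp add: add_nonneg_pos divide_neg_pos)

lemma f_inc: assumes "0 < x" "x < y" "\<And>z. x < z \<Longrightarrow> z < y \<Longrightarrow> PP z > 0"
  shows "f_lemma2 x < f_lemma2 y"
proof -
  obtain t where t: "x < t" "t < y" "f_lemma2 y - f_lemma2 x = (y - x) * (2*PP t/(sinh t^2*(cosh t^2+1)))"
    using MVT2[of x y f_lemma2 "\<lambda>z. 2*PP z/(sinh z^2*(cosh z^2+1))"] f_deriv assms by force
  have "0 < 2*PP t/(sinh t^2*(cosh t^2+1))" using D_pos assms t by force
  hence "0 < (y - x) * (2*PP t/(sinh t^2*(cosh t^2+1)))" using assms by (intro mult_pos_pos) auto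
  thus ?thesis using t by linarith
qed

lemma f_dec: assumes "0 < x" "x < y" "\<And>z. x < z \<Longrightarrow> z < y \<Longrightarrow> PP z < 0"
  shows "f_lemma2 y < f_lemma2 x"
proof -
  obtain t where t: "x < t" "t < y" "f_lemma2 y - f_lemma2 x = (y - x) * (2*PP t/(sinh t^2*(cosh t^2+1)))"
    using MVT2[of x y f_lemma2 "\<lambda>z. 2*PP z/(sinh z^2*(cosh z^2+1))"] f_deriv assms by force
  have "2*PP t/(sinh t^2*(cosh t^2+1)) < 0" using D_neg assms t by force
  hence "(y - x) * (2*PP t/(sinh t^2*(cosh t^2+1))) < 0" using assms by (intro mult_pos_neg) auto
  thus ?thesis using t by linarith
qed



lemma f_eq: "f_lemma2 = (\<lambda>x. 2*x/tanh x - ln ((cosh x ^ 2 + 1) / 2))"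
  by (simp add: fun_eq_iff f_lemma2_def)

lemma lim0: "(f_lemma2 \<longlongrightarrow> 2) (at_right 0)"
  unfolding f_eq tanh_def sinh_field_def cosh_field_def by real_asymp

lemma limtop: "(f_lemma2 \<longlongrightarrow> ln 8) at_top"
proof -
  have L: "(f_lemma2 \<longlongrightarrow> - ln ((1 / 2)^2 / 2)) at_top"
    unfolding f_eq tanh_def sinh_field_def cosh_field_def by real_asymp
  have e1: "((1 / 2)^2 / 2::real) = 1/8" by (simp add: power2_eq_square)
  have e2: "- ln (1/8) = (ln 8::real)" by (simp add: ln_div)
  have "- ln ((1 / 2)^2 / 2) = (ln 8::real)" unfolding e1 e2 ..
  thus ?thesis using L by simp
qed

lemma ln8: "2 < (ln 8::real)"
proof -
  have "ln (exp 2) < ln (8::real)" using exp2 by (subst ln_less_cancel_iff) auto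
  thus ?thesis by simp
qed

lemma f_gt_2: assumes "x > 0" shows "2 < f_lemma2 x"
proof (cases "PP x \<ge> 0")
  case True
  hence pos: "\<And>z. 0 < z \<Longrightarrow> z < x \<Longrightarrow> PP z > 0" using PP_pos_prop by blast
  have half: "2 \<le> f_lemma2 (x/2)"
  proof (rule ccontr)
    assume "\<not> 2 \<le> f_lemma2 (x/2)"
    hence "f_lemma2 (x/2) < 2" by simp
    hence "eventually (\<lambda>u. f_lemma2 (x/2) < f_lemma2 u) (at_right 0)"
      using order_tendstoD(1)[OF lim0] by blast
    then obtain b where b: "b > 0" "\<And>u. u > 0 \<Longrightarrow> u < b \<Longrightarrow> f_lemma2 (x/2) < f_lemma2 u"
      unfolding eventually_at_right_field by auto
    define u where "u = min b (x/2) / 2"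
    have u: "0 < u" "u < b" "u < x/2" using b assms unfolding u_def by auto
    have "f_lemma2 u < f_lemma2 (x/2)"
      by (rule f_inc) (use u pos in auto)
    with b(2)[OF u(1,2)] show False by simp
  qed
  have "f_lemma2 (x/2) < f_lemma2 x"
    by (rule f_inc) (use assms pos in auto)
  thus ?thesis using half by simp
next
  case False
  hence neg: "\<And>z. x < z \<Longrightarrow> PP z < 0" using PP_neg_prop assms by force
  have dbl: "ln 8 \<le> f_lemma2 (2*x)"
  proof (rule ccontr)
    assume "\<not> ln 8 \<le> f_lemma2 (2*x)"
    hence "f_lemma2 (2*x) < ln 8" by simp
    hence "eventually (\<lambda>u. f_lemma2 (2*x) < f_lemma2 u) at_top"
      using order_tendstoD(1)[OF limtop] by blast
    then obtain N where N: "\<And>u. u \<ge> N \<Longrightarrow> f_lemma2 (2*x) < f_lemma2 u"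
      unfolding eventually_at_top_linorder by auto
    define u where "u = max N (2*x+1)"
    have u: "N \<le> u" "2*x < u" unfolding u_def by auto
    have "f_lemma2 u < f_lemma2 (2*x)"
      by (rule f_dec) (use u neg assms in auto)
    with N[OF u(1)] show False by simp
  qed
  have "f_lemma2 (2*x) < f_lemma2 x"
    by (rule f_dec) (use assms neg in auto)
  thus ?thesis using dbl ln8 by simp
qed

theorem lemma2:
  shows "\<exists>x1::real. 1.606 \<le> x1 \<and> x1 < 1.607 \<and>
           2.1312 \<le> f_lemma2 x1 \<and> f_lemma2 x1 < 2.1313 \<and>
           (\<forall>x::real. x > 0 \<longrightarrow> 2 < f_lemma2 x \<and> f_lemma2 x \<le> f_lemma2 x1)"
proof -
  define a :: real where "a = 1606/1000"
  define b :: real where "b = 16065/10000"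
  have cont: "\<forall>x. a \<le> x \<and> x \<le> b \<longrightarrow> isCont f_lemma2 x"
    using f_deriv DERIV_isCont unfolding a_def b_def by force
  obtain M where M: "\<And>x. a \<le> x \<Longrightarrow> x \<le> b \<Longrightarrow> f_lemma2 x \<le> M"
    and "\<exists>x. a \<le> x \<and> x \<le> b \<and> f_lemma2 x = M"
    using isCont_eq_Ub[of a b f_lemma2] cont unfolding a_def b_def by force
  then obtain x1 where x1: "a \<le> x1" "x1 \<le> b" "f_lemma2 x1 = M" by blast
  have fa: "21312/10000 \<le> f_lemma2 a" "f_lemma2 a \<le> 2131286/1000000"
    using fa_bounds unfolding a_def by auto
  have max1: "f_lemma2 a \<le> f_lemma2 x1" using M[of a] x1 unfolding a_def b_def by simp
  have up: "f_lemma2 x1 < 21313/10000"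
  proof (cases "x1 = a")
    case True thus ?thesis using fa by simp
  next
    case False
    hence ax: "a < x1" using x1 by simp
    obtain t where t: "a < t" "t < x1" "f_lemma2 x1 - f_lemma2 a = (x1 - a) * (2*PP t/(sinh t^2*(cosh t^2+1)))"
      using MVT2[of a x1 f_lemma2 "\<lambda>z. 2*PP z/(sinh z^2*(cosh z^2+1))"] f_deriv ax
      unfolding a_def by force
    have "2*PP t/(sinh t^2*(cosh t^2+1)) \<le> 1/100"
      using D_bound[of t] t x1 unfolding a_def b_def by simp
    hence "(x1 - a) * (2*PP t/(sinh t^2*(cosh t^2+1))) \<le> (x1 - a) * (1/100)"
      using ax by (intro mult_left_mono) auto
    moreover have "(x1 - a) * (1/100) \<le> (b - a) * (1/100)" using x1 by simp
    moreover have "(b - a) * (1/100) = 5/1000000" unfolding a_def b_def by simp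
    ultimately have "f_lemma2 x1 - f_lemma2 a \<le> 5/1000000" using t by linarith
    thus ?thesis using fa by linarith
  qed
  have glob: "f_lemma2 x \<le> f_lemma2 x1" if "x > 0" for x
  proof -
    consider "x < a" | "a \<le> x \<and> x \<le> b" | "b < x" by linarith
    thus ?thesis
    proof cases
      case 1
      have "f_lemma2 x < f_lemma2 a"
      proof (rule f_inc)
        fix z assume "x < z" "z < a"
        thus "PP z > 0" using PP_pos_prop[of z a] PPa that unfolding a_def by force
      qed (use that 1 in auto)
      thus ?thesis using max1 by simp
    next
      case 2 thus ?thesis using M x1 by simp
    next
      case 3
      have "f_lemma2 x < f_lemma2 b"
      proof (rule f_dec)
        fix z assume "b < z" "z < x"
        thus "PP z < 0" using PP_neg_prop[of b z] PPb unfolding b_def by force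
      qed (use 3 in \<open>auto simp: b_def\<close>)
      moreover have "f_lemma2 b \<le> f_lemma2 x1" using M[of b] x1 unfolding a_def b_def by simp
      ultimately show ?thesis by simp
    qed
  qed
  show ?thesis
  proof (intro exI[of _ x1] conjI allI impI)
    show "1.606 \<le> x1" using x1 unfolding a_def by simp
    show "x1 < 1.607" using x1 unfolding b_def by simp
    show "2.1312 \<le> f_lemma2 x1" using fa max1 by simp
    show "f_lemma2 x1 < 2.1313" using up by simp
  next
    fix x :: real assume "x > 0"
    thus "2 < f_lemma2 x" by (rule f_gt_2)
  next
    fix x :: real assume "x > 0"
    thus "f_lemma2 x \<le> f_lemma2 x1" by (rule glob)
  qed
qed


end
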